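(* In the setting described in the context, for every $y\in\mathbb R^p$ and $n\ge1$, $$\widetilde a_{n+1}(y)+2\tau_n\widetilde J(x_n,w_n,y)\le\widetilde a_n(y)-b_n,$$ where $\widetilde J(x,w,y)=F(x,w)+\langle y,H(x)-w\rangle-F(x^\star,w^\star)$, $\widetilde a_n(y)=\frac{\psi}{\psi-1}\|z_{n+1}-x^\star\|^2+\frac1\beta\|y_{n-1}-y\|^2+\omega\delta_{n-1}\|x_n-x_{n-1}\|^2$, and $b_n=-\frac{\tau_n\tau_{n-1}}{\xi}\|\theta_n\|^2+\frac1\beta\|y_n-y_{n-1}\|^2+\omega\delta_{n-1}\|x_n-x_{n-1}\|^2-2\tau_n\Phi_n^y$.
   Context: Let $f:\mathbb{R}^p\to(-\infty,+\infty]$ and $g:\mathbb{R}^q\to(-\infty,+\infty]$ be proper closed convex functions; $f^*$ is the Fenchel conjugate, $\mathrm{dom}$ the effective domain, $\mathrm{Prox}_{\lambda h}(x)=\arg\min_u\{h(u)+\frac{1}{2\lambda}\|u-x\|^2\}$. Let $h:\mathbb R^q\to\mathbb R$ be convex with $L_h$-Lipschitz gradient, and $H:\mathrm{dom}(g)\to\mathrm{dom}(f)$ continuously differentiable with Jacobian $H'$, such that $x\mapsto\langle H(x),y\rangle$ is convex for every $y\in\mathrm{dom}(f^* )$. Set $\Phi(x,y)=h(x)+\langle H(x),y\rangle$ and $\mathcal L(x,y)=g(x)+\Phi(x,y)-f^*(y)$. Assume: (A1) the set of saddle points $\{(x^\star,y^\star)\in\mathrm{dom}(g)\times\mathrm{dom}(f^*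 ):-\nabla_x\Phi(x^\star,y^\star)\in\partial g(x^\star),\ \nabla_y\Phi(x^\star,y^\star)\in\partial f^*(y^\star)\}$ is nonempty, $\mathrm{dom}(g)\times\mathrm{dom}(f^* )\subseteq\mathrm{dom}(\Phi)$, $\mathcal L(x^\star,y^\star)$ finite; (A2) $\Phi(\cdot,y)$ convex differentiable, $\Phi(x,\cdot)$ concave differentiable, and on every pair of bounded sets $\mathcal X,\mathcal Y$ there are $L_{yy},L_{xx}\ge0,L_{xy}>0$ with $\|\nabla_y\Phi(x,y)-\nabla_y\Phi(x,\tilde y)\|\le L_{yy}\|y-\tilde y\|$, $\|\nabla_x\Phi(x,y)-\nabla_x\Phi(\tilde x,\tilde y)\|\le L_{xx}\|x-\tilde x\|+L_{xy}\|y-\tilde y\|$ on $(\mathcal X\cap\mathrm{dom}(g))\times(\mathcal Y\cap\mathrm{dom}(f^* ))$. Let $F(x,w)=g(x)+h(x)+f(w)$, and let $(x^\star,w^\star,y^\star)$ be a fixed point of $\widetilde\Omega=\{(x,w,y)\in\mathrm{dom}(g)\times\mathrm{dom}(f)\times\mathrm{dom}(f^* ): -H'(x)^\top y-\nabla h(x)\in\partial g(x),\ y\in\partial f(w),\ H(x)=w\}$. Algorithm PDAc-L (applied to this $\Phi$): choose $\psi\in(1,1+\sqrt3)$, $\xi>0$, $\varphi>1$ with $\omega:=2\psi-\xi-\frac{\psi^3\varphi}{1+\psi}>0$, $\tau_{\max}>0$, $\nu,\mu\in(0,1)$, $\eta\in[0,1)$, integer $M\ge1$, $\beta>0$, $x_0\in\mathrm{dom}(g)$,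 $y_0\in\mathrm{dom}(f^* )$, $\tau_0\in(0,\tau_{\max}]$; $z_0=x_0$, $\delta_0=1$. For $n\ge1$: $z_n=\frac{\psi-1}{\psi}x_{n-1}+\frac1\psi z_{n-1}$, $x_n=\mathrm{Prox}_{\tau_{n-1}g}(z_n-\tau_{n-1}\nabla_x\Phi(x_{n-1},y_{n-1}))$; with $\tau=\min\{\varphi\tau_{n-1},\tau_{\max}\}$, set $\tau_n=\tau\mu^i$, $y_n=\mathrm{Prox}_{\beta\tau_nf^*}(y_{n-1}+\beta\tau_nH(x_n))$, where $i\ge0$ is the smallest integer with $\frac{\tau_n\tau_{n-1}}{\xi}\|\theta_n\|^2+2\tau_n\Phi_n^y\le\nu r_n+(1-\nu)c_n$, $\theta_n=\nabla_x\Phi(x_n,y_n)-\nabla_x\Phi(x_{n-1},y_{n-1})$, $\Phi_n^y=\Phi(x_n,y_{n-1})+\langle\nabla_y\Phi(x_n,y_{n-1}),y_n-y_{n-1}\rangle-\Phi(x_n,y_n)$ (here $=0$), $r_n=\omega\delta_{n-1}\|x_n-x_{n-1}\|^2+\frac1\beta\|y_n-y_{n-1}\|^2$, $c_n=\frac{\eta}{|\mathcal I_n|}\sum_{i\in\mathcal I_n}r_i$, $\mathcal I_n=\{n-1,\dots,\max\{n-M,1\}\}$ ($c_1:=0$); $\delta_n=\tau_n/\tau_{n-1}$. Define $w_n=\mathrm{Prox}_{f/(\beta\tau_n)}(y_{n-1}/(\beta\tau_n)+H(x_n))$, so that $y_n=y_{n-1}+\beta\tau_n(H(x_n)-w_n)$.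 *)

theory Defs
  imports "HOL-Analysis.Analysis" "HOL-Library.Extended_Real"
begin

definition edom :: "('a \<Rightarrow> ereal) \<Rightarrow> 'a set" where
  "edom f = {x. f x < \<infinity>}"

definition epi :: "('a \<Rightarrow> ereal) \<Rightarrow> ('a \<times> real) set" where
  "epi f = {(x, r). f x \<le> ereal r}"

text \<open>proper, closed (lower semicontinuous = closed epigraph), convex (convex epigraph)\<close>
definition proper_closed_convex :: "('a::real_normed_vector \<Rightarrow> ereal) \<Rightarrow> bool" where
  "proper_closed_convex f \<longleftrightarrow>
     convex (epi f) \<and> closed (epi f) \<and> (\<forall>x. f x \<noteq> -\<infinity>) \<and> (\<exists>x. f x \<noteq> \<infinity>)"

definition fconj :: "('a::real_inner \<Rightarrow> ereal) \<Rightarrow> 'a \<Rightarrow> ereal" where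
  "fconj f y = (SUP x. ereal (x \<bullet> y) - f x)"

definition subdiff :: "('a::real_inner \<Rightarrow> ereal) \<Rightarrow> 'a \<Rightarrow> 'a set" where
  "subdiff f x = {v. \<forall>u. f x + ereal (v \<bullet> (u - x)) \<le> f u}"

definition Prox :: "real \<Rightarrow> ('a::real_normed_vector \<Rightarrow> ereal) \<Rightarrow> 'a \<Rightarrow> 'a set" where
  "Prox lam h x = {u. \<forall>v. h u + ereal (norm (u - x)^2 / (2 * lam))
                          \<le> h v + ereal (norm (v - x)^2 / (2 * lam))}"

definition Phi :: "('a \<Rightarrow> real) \<Rightarrow> ('a \<Rightarrow> 'b::real_inner) \<Rightarrow> 'a \<Rightarrow> 'b \<Rightarrow> real" where
  "Phi h H x y = h x + H x \<bullet> y"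

definition gradxPhi :: "('a::real_inner \<Rightarrow> 'a) \<Rightarrow> ('a \<Rightarrow> 'a \<Rightarrow>\<^sub>L 'b::real_inner) \<Rightarrow> 'a \<Rightarrow> 'b \<Rightarrow> 'a" where
  "gradxPhi gh H' x y = gh x + adjoint (blinfun_apply (H' x)) y"

definition delta :: "(nat \<Rightarrow> real) \<Rightarrow> nat \<Rightarrow> real" where
  "delta tau n = (if n = 0 then 1 else tau n / tau (n - 1))"

definition rseq :: "real \<Rightarrow> real \<Rightarrow> (nat \<Rightarrow> real) \<Rightarrow> (nat \<Rightarrow> 'a::real_normed_vector)
                      \<Rightarrow> (nat \<Rightarrow> 'b::real_normed_vector) \<Rightarrow> nat \<Rightarrow> real" where
  "rseq \<omega> \<beta> tau x y i = \<omega> * delta tau (i - 1) * norm (x i - x (i - 1))^2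
                           + 1 / \<beta> * norm (y i - y (i - 1))^2"

definition Iset :: "nat \<Rightarrow> nat \<Rightarrow> nat set" where
  "Iset M n = {max (n - M) 1 .. n - 1}"

definition cseq :: "real \<Rightarrow> nat \<Rightarrow> real \<Rightarrow> real \<Rightarrow> (nat \<Rightarrow> real) \<Rightarrow> (nat \<Rightarrow> 'a::real_normed_vector)
                      \<Rightarrow> (nat \<Rightarrow> 'b::real_normed_vector) \<Rightarrow> nat \<Rightarrow> real" where
  "cseq \<eta> M \<omega> \<beta> tau x y n =
     (if n = 1 then 0
      else \<eta> / real (card (Iset M n)) * (\<Sum>i\<in>Iset M n. rseq \<omega> \<beta> tau x y i))"

definition ls_cond ::
  "('a::real_inner \<Rightarrow> real) \<Rightarrow> ('a \<Rightarrow> 'a) \<Rightarrow> ('a \<Rightarrow> 'b::real_inner) \<Rightarrow> ('a \<Rightarrow> 'a \<Rightarrow>\<^sub>L 'b)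
    \<Rightarrow> real \<Rightarrow> real \<Rightarrow> real \<Rightarrow> real \<Rightarrow> real \<Rightarrow> nat
    \<Rightarrow> (nat \<Rightarrow> real) \<Rightarrow> (nat \<Rightarrow> 'a) \<Rightarrow> (nat \<Rightarrow> 'b) \<Rightarrow> nat \<Rightarrow> real \<Rightarrow> 'b \<Rightarrow> bool" where
  "ls_cond h gh H H' \<xi> \<nu> \<eta> \<omega> \<beta> M tau x y n t yt \<longleftrightarrow>
     (let \<theta> = gradxPhi gh H' (x n) yt - gradxPhi gh H' (x (n - 1)) (y (n - 1));
          Phiy = Phi h H (x n) (y (n - 1)) + H (x n) \<bullet> (yt - y (n - 1)) - Phi h H (x n) yt;
          r = \<omega> * delta tau (n - 1) * norm (x n - x (n - 1))^2 + 1 / \<beta> * norm (yt - y (n - 1))^2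
      in t * tau (n - 1) / \<xi> * norm \<theta>^2 + 2 * t * Phiy
           \<le> \<nu> * r + (1 - \<nu>) * cseq \<eta> M \<omega> \<beta> tau x y n)"

end

theory Submission
  imports Defs
begin

lemma pcc_conv:
  fixes f :: "'a::real_normed_vector \<Rightarrow> ereal"
  assumes "proper_closed_convex f" "f u = ereal a" "f w = ereal b" "0 \<le> t" "t \<le> 1"
  shows "f ((1 - t) *\<^sub>R u + t *\<^sub>R w) \<le> ereal ((1 - t) * a + t * b)"
proof -
  have c: "convex (epi f)" using assms(1) by (simp add: proper_closed_convex_def)
  have "(u, a) \<in> epi f" "(w, b) \<in> epi f" using assms(2,3) by (auto simp: epi_def)
  from convexD_alt[OF c this assms(4,5)]
  have "(1 - t) *\<^sub>R (u, a) + t *\<^sub>R (w, b) \<in> epi f" by simp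
  then show ?thesis by (simp add: epi_def)
qed

lemma convex_grad_ineq:
  fixes \<phi> :: "'a::real_normed_vector \<Rightarrow> real"
  assumes cv: "convex_on S \<phi>" and d: "(\<phi> has_derivative D) (at u within S)"
    and u: "u \<in> S" and v: "v \<in> S"
  shows "\<phi> u + D (v - u) \<le> \<phi> v"
proof (rule ccontr)
  assume nt: "\<not> \<phi> u + D (v - u) \<le> \<phi> v"
  define e where "e = \<phi> u + D (v - u) - \<phi> v"
  have e: "e > 0" using nt by (simp add: e_def)
  have bl: "bounded_linear D" using d by (simp add: has_derivative_within_alt)
  have "v \<noteq> u" proof assume "v = u" then show False using e linear_0[OF bounded_linear.linear[OF bl]] by (simp add: e_def) qed
  then have nv: "norm (v - u) > 0" by simp
  define eps where "eps = e / (2 * norm (v - u))"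
  have "eps > 0" using e nv by (simp add: eps_def)
  then obtain dd where dd: "dd > 0" and H: "\<And>y. y \<in> S \<Longrightarrow> norm (y - u) < dd \<Longrightarrow>
      norm (\<phi> y - \<phi> u - D (y - u)) \<le> eps * norm (y - u)"
    using d unfolding has_derivative_within_alt by blast
  define t where "t = min (1/2) (dd / (2 * norm (v - u)))"
  have t: "0 < t" "t \<le> 1" using dd nv by (auto simp: t_def)
  define y where "y = (1 - t) *\<^sub>R u + t *\<^sub>R v"
  have yS: "y \<in> S" using cv u v t unfolding y_def convex_on_def
    by (meson convexD_alt less_le)
  have yu: "y - u = t *\<^sub>R (v - u)" by (simp add: y_def algebra_simps)
  have "norm (y - u) = t * norm (v - u)" using t by (simp add: yu)
  also have "\<dots> \<le> dd / (2 * norm (v - u)) * norm (v - u)"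
    by (rule mult_right_mono) (auto simp: t_def)
  also have "\<dots> = dd / 2" using nv by simp
  finally have "norm (y - u) < dd" using dd by simp
  from H[OF yS this] have h1: "norm (\<phi> y - \<phi> u - t * D (v - u)) \<le> eps * (t * norm (v - u))"
    using t by (simp add: yu linear_simps bl)
  have h2: "\<phi> y \<le> (1 - t) * \<phi> u + t * \<phi> v" using convex_onD[OF cv] t u v by (simp add: y_def)
  have q1: "eps * (t * norm (v - u)) = t * e / 2" using nv by (simp add: eps_def)
  have q2: "\<phi> y - \<phi> u - t * D (v - u) \<le> - t * e" using h2 by (simp add: e_def algebra_simps)
  have q3: "- (\<phi> y - \<phi> u - t * D (v - u)) \<le> t * e / 2" using abs_le_D2[OF h1[unfolded real_norm_def]] q1 by simp
  have "0 < t * e" using t e by simp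
  then show False using q2 q3 by linarith
qed

lemma small_t:
  fixes A B C :: real
  assumes "C \<ge> 0" "\<And>t. 0 < t \<Longrightarrow> t \<le> 1 \<Longrightarrow> A \<le> B + t * C"
  shows "A \<le> B"
proof (rule ccontr)
  assume "\<not> A \<le> B"
  define t where "t = min 1 ((A - B) / (2 * C + 1))"
  have t: "0 < t" "t \<le> 1" using \<open>\<not> A \<le> B\<close> assms(1) by (auto simp: t_def)
  have "t * C \<le> (A - B) / (2 * C + 1) * C" using assms(1) by (intro mult_right_mono) (auto simp: t_def)
  also have "\<dots> = (A - B) * (C / (2 * C + 1))" by simp
  also have "\<dots> < (A - B) * 1"
    using \<open>\<not> A \<le> B\<close> assms(1) by (intro mult_strict_left_mono) auto
  also have "\<dots> = A - B" by simp
  finally show False using assms(2)[OF t] by simp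
qed

lemma prox_finite:
  fixes f :: "'a::real_normed_vector \<Rightarrow> ereal"
  assumes pcc: "proper_closed_convex f" and u: "u \<in> Prox lam f d"
  shows "f u = ereal (real_of_ereal (f u))"
proof -
  obtain x0 where x0: "f x0 \<noteq> \<infinity>" using pcc by (auto simp: proper_closed_convex_def)
  have "f u + ereal (norm (u - d)^2 / (2 * lam)) \<le> f x0 + ereal (norm (x0 - d)^2 / (2 * lam))"
    using u by (simp add: Prox_def)
  moreover have "f x0 + ereal (norm (x0 - d)^2 / (2 * lam)) < \<infinity>" using x0 by simp
  ultimately have "f u \<noteq> \<infinity>" by auto
  moreover have "f u \<noteq> -\<infinity>" using pcc by (simp add: proper_closed_convex_def)
  ultimately show ?thesis by (cases "f u") auto
qed

lemma prox_subgrad: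
  fixes f :: "'a::real_inner \<Rightarrow> ereal"
  assumes pcc: "proper_closed_convex f" and lam: "lam > 0" and u: "u \<in> Prox lam f d"
  shows "f u + ereal (((1 / lam) *\<^sub>R (d - u)) \<bullet> (v - u)) \<le> f v"
proof (cases "f v = \<infinity>")
  case True
  then show ?thesis by simp
next
  case False
  define a where "a = real_of_ereal (f u)"
  have fa: "f u = ereal a" using prox_finite[OF pcc u] by (simp add: a_def)
  have "f v \<noteq> -\<infinity>" using pcc by (simp add: proper_closed_convex_def)
  then obtain b where fb: "f v = ereal b" using False by (cases "f v") auto
  define q where "q = (d - u) \<bullet> (v - u)"
  define m where "m = norm (v - u)^2"
  define N0 where "N0 = norm (u - d)^2"
  have key: "a \<le> b - q / lam + t * (m / (2 * lam))" if t: "0 < t" "t \<le> 1" for t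
  proof -
    define wt where "wt = (1 - t) *\<^sub>R u + t *\<^sub>R v"
    have c1: "f wt \<le> ereal ((1 - t) * a + t * b)" unfolding wt_def
      using pcc_conv[OF pcc fa fb] t by simp
    have c2: "f u + ereal (N0 / (2 * lam)) \<le> f wt + ereal (norm (wt - d)^2 / (2 * lam))"
      using u by (simp add: Prox_def N0_def)
    have c3: "f wt + ereal (norm (wt - d)^2 / (2 * lam)) \<le> ereal ((1 - t) * a + t * b) + ereal (norm (wt - d)^2 / (2 * lam))"
      by (rule add_right_mono[OF c1])
    have "ereal (a + N0 / (2 * lam)) \<le> ereal ((1 - t) * a + t * b + norm (wt - d)^2 / (2 * lam))"
      using order_trans[OF c2 c3] fa by simp
    then have r: "a + N0 / (2 * lam) \<le> (1 - t) * a + t * b + norm (wt - d)^2 / (2 * lam)"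
      by simp
    have wd: "wt - d = (u - d) + t *\<^sub>R (v - u)" by (simp add: wt_def algebra_simps)
    have nn: "norm (wt - d)^2 = N0 + (- 2 * t * q + t^2 * m)"
      unfolding wd q_def m_def N0_def power2_norm_eq_inner
      by (simp add: inner_simps algebra_simps power2_eq_square inner_commute)
    have sp: "norm (wt - d)^2 / (2 * lam) = N0 / (2 * lam) + (- 2 * t * q + t^2 * m) / (2 * lam)"
      unfolding nn by (simp add: add_divide_distrib)
    have e: "(- 2 * t * q + t^2 * m) / (2 * lam) = t * (- q / lam + t * (m / (2 * lam)))"
      using lam by (simp add: field_simps power2_eq_square)
    have "t * a \<le> t * b + t * (- q / lam + t * (m / (2 * lam)))"
      using r unfolding sp e by (simp add: algebra_simps)
    then have "t * a \<le> t * (b - q / lam + t * (m / (2 * lam)))"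
      by (simp add: algebra_simps)
    then show ?thesis using t by simp
  qed
  have "a \<le> b - q / lam"
    by (rule small_t[of "m / (2 * lam)"]) (use key lam in \<open>auto simp: m_def\<close>)
  moreover have "((1 / lam) *\<^sub>R (d - u)) \<bullet> (v - u) = q / lam" by (simp add: q_def)
  ultimately show ?thesis using fa fb by (simp add: q_def)
qed

lemma fconj_lower:
  fixes f :: "'a::real_inner \<Rightarrow> ereal"
  assumes "f w = ereal fw"
  shows "ereal (w \<bullet> v - fw) \<le> fconj f v"
proof -
  have "ereal (w \<bullet> v) - f w \<le> fconj f v" unfolding fconj_def by (rule SUP_upper) simp
  then show ?thesis using assms by simp
qed

lemma fconj_at_subgrad:
  fixes f :: "'a::real_inner \<Rightarrow> ereal"
  assumes fw: "f w = ereal fw" and S: "\<And>u. f w + ereal (yh \<bullet> (u - w)) \<le> f u"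
  shows "fconj f yh = ereal (w \<bullet> yh - fw)"
proof (rule antisym)
  show "fconj f yh \<le> ereal (w \<bullet> yh - fw)" unfolding fconj_def
  proof (rule SUP_least)
    fix x
    show "ereal (x \<bullet> yh) - f x \<le> ereal (w \<bullet> yh - fw)"
    proof (cases "f x")
      case (real r)
      have "ereal (fw + yh \<bullet> (x - w)) \<le> ereal r" using S[of x] fw real by simp
      then show ?thesis using real by (simp add: inner_simps inner_commute)
    next
      case PInf then show ?thesis by simp
    next
      case MInf then show ?thesis using S[of x] fw by simp
    qed
  qed
  show "ereal (w \<bullet> yh - fw) \<le> fconj f yh" using fconj_lower[of f w fw, OF fw] by simp
qed

lemma moreau_y:
  fixes f :: "'a::real_inner \<Rightarrow> ereal"
  assumes pcc: "proper_closed_convex f" and lam: "lam > 0"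
    and w: "w \<in> Prox (1 / lam) f ((1 / lam) *\<^sub>R y0 + c0)"
    and y: "y \<in> Prox lam (fconj f) (y0 + lam *\<^sub>R c0)"
  shows "y = y0 + lam *\<^sub>R (c0 - w)" "\<And>u. f w + ereal (y \<bullet> (u - w)) \<le> f u"
    "f w = ereal (real_of_ereal (f w))"
    "fconj f y = ereal (w \<bullet> y - real_of_ereal (f w))"
proof -
  define yh where "yh = y0 + lam *\<^sub>R (c0 - w)"
  define fw where "fw = real_of_ereal (f w)"
  have fw: "f w = ereal fw" using prox_finite[OF pcc w] by (simp add: fw_def)
  have eq2: "lam *\<^sub>R ((1 / lam) *\<^sub>R y0 + c0 - w) = yh"
    using lam by (simp add: yh_def scaleR_add_right scaleR_diff_right)
  have S: "f w + ereal (yh \<bullet> (u - w)) \<le> f u" for u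
  proof -
    have "f w + ereal (((1 / (1 / lam)) *\<^sub>R ((1 / lam) *\<^sub>R y0 + c0 - w)) \<bullet> (u - w)) \<le> f u"
      using prox_subgrad[OF pcc _ w, of u] lam by simp
    then show ?thesis using eq2 by simp
  qed
  have cyh: "fconj f yh = ereal (w \<bullet> yh - fw)" by (rule fconj_at_subgrad[OF fw S])
  define C where "C = y0 + lam *\<^sub>R c0"
  have "fconj f y + ereal (norm (y - C)^2 / (2 * lam)) \<le> fconj f yh + ereal (norm (yh - C)^2 / (2 * lam))"
    using y by (simp add: Prox_def C_def)
  moreover have "ereal (w \<bullet> y - fw) + ereal (norm (y - C)^2 / (2 * lam)) \<le> fconj f y + ereal (norm (y - C)^2 / (2 * lam))"
    by (rule add_right_mono[OF fconj_lower[of f w fw, OF fw]])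
  ultimately have "ereal (w \<bullet> y - fw) + ereal (norm (y - C)^2 / (2 * lam)) \<le> ereal (w \<bullet> yh - fw) + ereal (norm (yh - C)^2 / (2 * lam))"
    unfolding cyh by (rule order_trans[rotated])
  then have r: "w \<bullet> y + norm (y - C)^2 / (2 * lam) \<le> w \<bullet> yh + norm (yh - C)^2 / (2 * lam)" by simp
  have yc: "y - C = (y - yh) - lam *\<^sub>R w" "yh - C = - lam *\<^sub>R w"
    by (simp_all add: C_def yh_def scaleR_diff_right)
  define X where "X = norm (y - yh)^2"
  define Y where "Y = (y - yh) \<bullet> w"
  define L where "L = lam^2 * norm w ^2"
  have n1: "norm (y - C)^2 = X - 2 * lam * Y + L"
    unfolding yc X_def Y_def L_def power2_norm_eq_inner by (simp add: inner_simps inner_commute power2_eq_square algebra_simps)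
  have n2: "norm (yh - C)^2 = L" unfolding yc L_def by (simp add: power2_eq_square)
  have n3: "w \<bullet> y = w \<bullet> yh + Y" unfolding Y_def by (simp add: inner_simps inner_commute)
  have n4: "(X - 2 * lam * Y + L) / (2 * lam) = X / (2 * lam) - Y + L / (2 * lam)"
    using lam by (simp add: field_simps)
  have "X / (2 * lam) \<le> 0" using r unfolding n1 n2 n3 n4 by linarith
  then have "norm (y - yh)^2 / (2 * lam) \<le> 0" by (simp add: X_def)
  then have "norm (y - yh)^2 \<le> 0" using lam by (simp add: divide_le_0_iff)
  then have yy: "y = yh" by simp
  show "y = y0 + lam *\<^sub>R (c0 - w)" using yy yh_def by simp
  show "\<And>u. f w + ereal (y \<bullet> (u - w)) \<le> f u" using S yy by simp
  show "f w = ereal (real_of_ereal (f w))" using fw fw_def by simp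
  show "fconj f y = ereal (w \<bullet> y - real_of_ereal (f w))" using cyh yy fw_def by simp
qed


lemma norm_comb:
  fixes A B :: "'a::real_inner"
  shows "norm (al *\<^sub>R A + be *\<^sub>R B) ^ 2 = al^2 * (A \<bullet> A) + 2 * al * be * (A \<bullet> B) + be^2 * (B \<bullet> B)"
  unfolding power2_norm_eq_inner by (simp add: inner_simps inner_commute power2_eq_square algebra_simps)

lemma lin_aux:
  fixes c0 a2 t2 b2 r x y z :: real
  assumes "c0 * a2 = 1 - r" "c0 * t2 = 2 * r" "c0 - c0 * b2 = 1 + r"
  shows "- 2 * x + 2 * y = c0 * z - c0 * (a2 * x + t2 * y + b2 * z) - (1 + r) * (x - 2 * y + z)"
proof -
  have "c0 * (a2 * x + t2 * y + b2 * z) = (c0 * a2) * x + (c0 * t2) * y + (c0 * b2) * z"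
    by (simp add: algebra_simps)
  also have "\<dots> = (1 - r) * x + (2 * r) * y + (c0 - 1 - r) * z" using assms by simp
  finally show ?thesis by (simp add: algebra_simps)
qed

lemma zid:
  fixes A B :: "'a::real_inner"
  assumes psi: "\<psi> > 1"
  shows "2 * ((A - B) \<bullet> (- A)) = \<psi> / (\<psi> - 1) * norm B ^ 2
     - \<psi> / (\<psi> - 1) * norm (((\<psi> - 1) / \<psi>) *\<^sub>R A + (1 / \<psi>) *\<^sub>R B) ^ 2
     - ((\<psi> + 1) / \<psi>) * norm (A - B) ^ 2"
proof -
  have n1: "norm (((\<psi> - 1) / \<psi>) *\<^sub>R A + (1 / \<psi>) *\<^sub>R B) ^ 2
     = ((\<psi> - 1) / \<psi>)^2 * (A \<bullet> A) + 2 * ((\<psi> - 1) / \<psi>) * (1 / \<psi>) * (A \<bullet> B) + (1 / \<psi>)^2 * (B \<bullet> B)"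
    by (rule norm_comb)
  have n2: "norm (A - B) ^ 2 = A \<bullet> A - 2 * (A \<bullet> B) + B \<bullet> B"
    unfolding power2_norm_eq_inner by (simp add: inner_simps inner_commute)
  have n3: "norm B ^ 2 = B \<bullet> B" by (simp add: power2_norm_eq_inner)
  have l: "2 * ((A - B) \<bullet> (- A)) = - 2 * (A \<bullet> A) + 2 * (A \<bullet> B)" by (simp add: inner_simps inner_commute)
  have k1: "\<psi> / (\<psi> - 1) * ((\<psi> - 1) / \<psi>)^2 = 1 - 1 / \<psi>" using psi by (simp add: field_simps power2_eq_square)
  have k2: "\<psi> / (\<psi> - 1) * (2 * ((\<psi> - 1) / \<psi>) * (1 / \<psi>)) = 2 * (1 / \<psi>)" using psi by (simp add: field_simps power2_eq_square)
  have k3: "\<psi> / (\<psi> - 1) - \<psi> / (\<psi> - 1) * (1 / \<psi>)^2 = 1 + 1 / \<psi>"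
  proof -
    have "\<psi> / (\<psi> - 1) - \<psi> / (\<psi> - 1) * (1 / \<psi>)^2 = \<psi> / (\<psi> - 1) * (1 - (1 / \<psi>)^2)"
      by (simp add: algebra_simps)
    also have "1 - (1 / \<psi>)^2 = (\<psi> - 1) * (\<psi> + 1) / \<psi>^2"
      using psi by (simp add: field_simps power2_eq_square)
    also have "\<psi> / (\<psi> - 1) * ((\<psi> - 1) * (\<psi> + 1) / \<psi>^2) = (\<psi> + 1) / \<psi>"
      using psi by (simp add: power2_eq_square)
    also have "\<dots> = 1 + 1 / \<psi>" using psi by (simp add: field_simps)
    finally show ?thesis .
  qed
  have k4: "(\<psi> + 1) / \<psi> = 1 + 1 / \<psi>" using psi by (simp add: field_simps)
  show ?thesis unfolding n1 n2 n3 l k4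
    by (rule lin_aux[OF k1 _ k3]) (use k2 in \<open>simp add: mult.assoc\<close>)
qed

lemma young_theta:
  fixes th d :: "'a::real_inner"
  assumes "c > 0" "p > 0" "xi > 0"
  shows "- 2 * c * (th \<bullet> d) \<le> c * p / xi * norm th ^ 2 + xi * (c / p) * norm d ^ 2"
proof -
  have "0 \<le> norm (p *\<^sub>R th + xi *\<^sub>R d) ^ 2" by simp
  also have "norm (p *\<^sub>R th + xi *\<^sub>R d) ^ 2 = p^2 * norm th ^ 2 + 2 * p * xi * (th \<bullet> d) + xi^2 * norm d ^ 2"
    unfolding power2_norm_eq_inner by (simp add: inner_simps inner_commute power2_eq_square algebra_simps)
  finally have "0 \<le> (c / (p * xi)) * (p^2 * norm th ^ 2 + 2 * p * xi * (th \<bullet> d) + xi^2 * norm d ^ 2)"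
    using assms by simp
  also have "\<dots> = c * p / xi * norm th ^ 2 + 2 * c * (th \<bullet> d) + xi * (c / p) * norm d ^ 2"
    using assms by (simp add: field_simps power2_eq_square)
  finally show ?thesis by simp
qed

lemma key_quad:
  fixes a b :: "'a::real_inner"
  assumes psi: "\<psi> > 1" and P: "P = \<psi>^3 * \<phi> / (1 + \<psi>)" and phi: "\<phi> > 0"
    and dl: "0 \<le> dl" "dl \<le> \<phi>"
  shows "(2 * \<psi> - P) * dl * norm (a - b) ^ 2 + 2 * dl * \<psi> * (b \<bullet> (a - b)) \<le> ((\<psi> + 1) / \<psi>) * norm a ^ 2"
proof -
  have Ppos: "P > 0" using psi phi by (simp add: P)
  define AA where "AA = a \<bullet> a"
  define AB where "AB = a \<bullet> b"
  define BB where "BB = b \<bullet> b"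
  have sq: "0 \<le> norm ((\<psi> - P) *\<^sub>R a + P *\<^sub>R b) ^ 2" by simp
  have sqe: "norm ((\<psi> - P) *\<^sub>R a + P *\<^sub>R b) ^ 2 = (\<psi> - P)^2 * AA + 2 * (\<psi> - P) * P * AB + P^2 * BB"
    unfolding power2_norm_eq_inner AA_def AB_def BB_def
    by (simp add: inner_simps inner_commute power2_eq_square algebra_simps)
  have e1: "norm (a - b) ^ 2 = AA - 2 * AB + BB" unfolding power2_norm_eq_inner AA_def AB_def BB_def
    by (simp add: inner_simps inner_commute)
  have e2: "b \<bullet> (a - b) = AB - BB" unfolding AB_def BB_def by (simp add: inner_simps inner_commute)
  have e3: "norm a ^ 2 = AA" by (simp add: AA_def power2_norm_eq_inner)
  have AA0: "AA \<ge> 0" by (simp add: AA_def)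
  have mid: "(\<psi> - P) * (AA - 2 * AB + BB) + \<psi> * AA - \<psi> * BB \<le> \<psi>^2 / P * AA"
  proof -
    have "\<psi>^2 / P * AA - ((\<psi> - P) * (AA - 2 * AB + BB) + \<psi> * AA - \<psi> * BB)
        = ((\<psi> - P)^2 * AA + 2 * (\<psi> - P) * P * AB + P^2 * BB) / P"
      using Ppos by (simp add: field_simps power2_eq_square)
    also have "\<dots> \<ge> 0" using sq sqe Ppos by simp
    finally show ?thesis by simp
  qed
  have "(2 * \<psi> - P) * dl * norm (a - b) ^ 2 + 2 * dl * \<psi> * (b \<bullet> (a - b))
      = dl * ((\<psi> - P) * (AA - 2 * AB + BB) + \<psi> * AA - \<psi> * BB)"
    unfolding e1 e2 by (simp add: algebra_simps)
  also have "\<dots> \<le> dl * (\<psi>^2 / P * AA)" using mult_left_mono[OF mid dl(1)] .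
  also have "\<dots> \<le> \<phi> * (\<psi>^2 / P * AA)" using dl Ppos AA0 by (intro mult_right_mono) auto
  also have "\<phi> * (\<psi>^2 / P * AA) = ((\<psi> + 1) / \<psi>) * AA" using psi phi
    by (simp add: P field_simps power2_eq_square power3_eq_cube)
  finally show ?thesis by (simp add: e3)
qed

lemma aux_beta:
  fixes A B C W Z b :: real
  assumes "b > 0" "2 * W = A - B - C" "W = b * Z"
  shows "2 * Z = 1 / b * A - 1 / b * B - 1 / b * C"
proof -
  have "2 * Z = (A - B - C) / b" using assms by (simp add: field_simps)
  then show ?thesis by (simp add: diff_divide_distrib)
qed

lemma final_comb:
  fixes Ag Ah AH Af Ayw Av Avy Xa Xb Xc Xt DT Tq KZa KZb RA Wo Wx W BYa BYb BYd Cth Jd :: real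
  assumes "Jd = 2 * (Ag + Ah + Af + Av)"
    "Ag \<le> DT + Xa - Tq + Xb"
    "Ah + AH \<le> - Xc"
    "Af \<le> Ayw"
    "Ayw + Av - AH = Avy"
    "2 * Avy = BYa - BYb - BYd"
    "Xa + Xb - Xc = - Xt"
    "2 * (- Tq) = KZa - KZb - RA"
    "W + 2 * DT \<le> RA"
    "Wo + Wx = W"
    "- 2 * Xt \<le> Cth + Wx"
  shows "KZb + BYb + Wo + Jd \<le> KZa + BYa + Cth - BYd"
  using assms by argo

theorem lemma4p2:
  fixes f :: "'b::euclidean_space \<Rightarrow> ereal"
    and g :: "'a::euclidean_space \<Rightarrow> ereal"
    and h :: "'a \<Rightarrow> real" and gh :: "'a \<Rightarrow> 'a" and L\<^sub>h :: real
    and H :: "'a \<Rightarrow> 'b" and H' :: "'a \<Rightarrow> 'a \<Rightarrow>\<^sub>L 'b"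
    and xs :: 'a and ws :: 'b and ys :: 'b
    and \<psi> \<xi> \<phi> \<omega> \<tau>max \<nu> \<mu> \<eta> \<beta> :: real and M :: nat
    and x z :: "nat \<Rightarrow> 'a" and y w :: "nat \<Rightarrow> 'b" and \<tau> :: "nat \<Rightarrow> real"
  assumes f_pcc: "proper_closed_convex f"
    and g_pcc: "proper_closed_convex g"
    \<comment> \<open>h convex with L_h-Lipschitz gradient gh\<close>
    and h_convex: "convex_on UNIV h"
    and h_grad: "\<And>u. (h has_derivative (\<lambda>d. gh u \<bullet> d)) (at u)"
    and h_Lip: "L\<^sub>h \<ge> 0" "\<And>u v. norm (gh u - gh v) \<le> L\<^sub>h * norm (u - v)"
    \<comment> \<open>H : dom g \<rightarrow> dom f continuously differentiable with Jacobian H'\<close>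
    and H_maps: "H ` edom g \<subseteq> edom f"
    and H_deriv: "\<And>u. u \<in> edom g \<Longrightarrow> (H has_derivative blinfun_apply (H' u)) (at u within edom g)"
    and H'_cont: "continuous_on (edom g) H'"
    and H_conv: "\<And>v. v \<in> edom (fconj f) \<Longrightarrow> convex_on (edom g) (\<lambda>u. H u \<bullet> v)"
    \<comment> \<open>(A1)\<close>
    and A1: "\<exists>xa ya. xa \<in> edom g \<and> ya \<in> edom (fconj f)
               \<and> - gradxPhi gh H' xa ya \<in> subdiff g xa
               \<and> H xa \<in> subdiff (fconj f) ya
               \<and> \<bar>g xa + ereal (Phi h H xa ya) - fconj f ya\<bar> \<noteq> \<infinity>"
    \<comment> \<open>(A2)\<close>
    and A2_conv: "\<And>v. v \<in> edom (fconj f) \<Longrightarrow> convex_on (edom g) (\<lambda>u. Phi h H u v)"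
    and A2_Lip: "\<And>X Y. bounded X \<Longrightarrow> bounded Y \<Longrightarrow>
          \<exists>Lyy Lxx Lxy. Lyy \<ge> 0 \<and> Lxx \<ge> 0 \<and> Lxy > 0 \<and>
            (\<forall>u\<in>X \<inter> edom g. \<forall>u'\<in>X \<inter> edom g. \<forall>v\<in>Y \<inter> edom (fconj f). \<forall>v'\<in>Y \<inter> edom (fconj f).
               norm (H u - H u) \<le> Lyy * norm (v - v') \<and>
               norm (gradxPhi gh H' u v - gradxPhi gh H' u' v')
                 \<le> Lxx * norm (u - u') + Lxy * norm (v - v'))"
    \<comment> \<open>(xs, ws, ys) is a point of Omega-tilde\<close>
    and fix_dom: "xs \<in> edom g" "ws \<in> edom f" "ys \<in> edom (fconj f)"
    and fix_1: "- adjoint (blinfun_apply (H' xs)) ys - gh xs \<in> subdiff g xs"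
    and fix_2: "ys \<in> subdiff f ws"
    and fix_3: "H xs = ws"
    \<comment> \<open>parameters\<close>
    and psi: "1 < \<psi>" "\<psi> < 1 + sqrt 3"
    and xi: "\<xi> > 0" and phi: "\<phi> > 1"
    and omega: "\<omega> = 2 * \<psi> - \<xi> - \<psi>^3 * \<phi> / (1 + \<psi>)" "\<omega> > 0"
    and taumax: "\<tau>max > 0"
    and nu: "0 < \<nu>" "\<nu> < 1" and mu: "0 < \<mu>" "\<mu> < 1"
    and eta: "0 \<le> \<eta>" "\<eta> < 1"
    and M: "M \<ge> 1" and beta: "\<beta> > 0"
    and x0: "x 0 \<in> edom g" and y0: "y 0 \<in> edom (fconj f)"
    and tau0: "0 < \<tau> 0" "\<tau> 0 \<le> \<tau>max"
    \<comment> \<open>iteration PDAc-L\<close>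
    and z0: "z 0 = x 0"
    and z_step: "\<And>n. n \<ge> 1 \<Longrightarrow> z n = ((\<psi> - 1) / \<psi>) *\<^sub>R x (n - 1) + (1 / \<psi>) *\<^sub>R z (n - 1)"
    and x_step: "\<And>n. n \<ge> 1 \<Longrightarrow>
          x n \<in> Prox (\<tau> (n - 1)) g (z n - \<tau> (n - 1) *\<^sub>R gradxPhi gh H' (x (n - 1)) (y (n - 1)))"
    and linesearch: "\<And>n. n \<ge> 1 \<Longrightarrow>
          \<exists>i::nat. \<tau> n = min (\<phi> * \<tau> (n - 1)) \<tau>max * \<mu>^i
            \<and> y n \<in> Prox (\<beta> * \<tau> n) (fconj f) (y (n - 1) + (\<beta> * \<tau> n) *\<^sub>R H (x n))
            \<and> ls_cond h gh H H' \<xi> \<nu> \<eta> \<omega> \<beta> M \<tau> x y n (\<tau> n) (y n)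
            \<and> (\<forall>j<i. \<forall>yt. yt \<in> Prox (\<beta> * (min (\<phi> * \<tau> (n - 1)) \<tau>max * \<mu>^j)) (fconj f)
                         (y (n - 1) + (\<beta> * (min (\<phi> * \<tau> (n - 1)) \<tau>max * \<mu>^j)) *\<^sub>R H (x n))
                  \<longrightarrow> \<not> ls_cond h gh H H' \<xi> \<nu> \<eta> \<omega> \<beta> M \<tau> x y n
                          (min (\<phi> * \<tau> (n - 1)) \<tau>max * \<mu>^j) yt)"
    and w_def: "\<And>n. n \<ge> 1 \<Longrightarrow>
          w n \<in> Prox (1 / (\<beta> * \<tau> n)) f ((1 / (\<beta> * \<tau> n)) *\<^sub>R y (n - 1) + H (x n))"
  shows "\<forall>v::'b. \<forall>n\<ge>1.
     (let F = (\<lambda>u wv. g u + ereal (h u) + f wv);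
          J = (\<lambda>u wv. F u wv + ereal (v \<bullet> (H u - wv)) - F xs ws);
          a = (\<lambda>k. \<psi> / (\<psi> - 1) * norm (z (k + 1) - xs)^2 + 1 / \<beta> * norm (y (k - 1) - v)^2
                    + \<omega> * delta \<tau> (k - 1) * norm (x k - x (k - 1))^2);
          \<theta> = gradxPhi gh H' (x n) (y n) - gradxPhi gh H' (x (n - 1)) (y (n - 1));
          Phiy = Phi h H (x n) (y (n - 1)) + H (x n) \<bullet> (y n - y (n - 1)) - Phi h H (x n) (y n);
          b = - (\<tau> n * \<tau> (n - 1) / \<xi>) * norm \<theta>^2 + 1 / \<beta> * norm (y n - y (n - 1))^2
              + \<omega> * delta \<tau> (n - 1) * norm (x n - x (n - 1))^2 - 2 * \<tau> n * Phiy
      in ereal (a (n + 1)) + ereal (2 * \<tau> n) * J (x n) (w n) \<le> ereal (a n - b))"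
  apply (intro allI impI)
  subgoal premises prems for v n
proof -
  have n: "n \<ge> 1" using prems .
  have tpos: "\<tau> k > 0" for k
  proof (induction k)
    case 0 then show ?case using tau0 by simp
  next
    case (Suc k)
    obtain i where "\<tau> (Suc k) = min (\<phi> * \<tau> k) \<tau>max * \<mu>^i"
      using linesearch[of "Suc k"] by auto
    then show ?case using Suc phi taumax mu by simp
  qed
  have tle: "\<tau> k \<le> \<phi> * \<tau> (k - 1)" if k: "k \<ge> 1" for k
  proof -
    obtain i where ti: "\<tau> k = min (\<phi> * \<tau> (k - 1)) \<tau>max * \<mu>^i"
      using linesearch[OF k] by auto
    have m1: "\<mu>^i \<le> 1" using mu by (simp add: power_le_one)
    have m0: "min (\<phi> * \<tau> (k - 1)) \<tau>max \<ge> 0" using tpos[of "k-1"] phi taumax by simp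
    have "\<tau> k \<le> min (\<phi> * \<tau> (k - 1)) \<tau>max" unfolding ti
      by (rule mult_left_le[OF m1 m0])
    then show ?thesis by simp
  qed
  define p where "p = \<tau> (n - 1)"
  define c where "c = \<tau> n"
  define dl where "dl = c / p"
  have p: "p > 0" and c: "c > 0" using tpos by (simp_all add: p_def c_def)
  have dl: "0 \<le> dl" "dl \<le> \<phi>" using tle[OF n] p c by (simp_all add: dl_def c_def p_def field_simps)
  have delta_n: "delta \<tau> n = dl" using n by (simp add: delta_def dl_def c_def p_def)
  have bc: "\<beta> * c > 0" using beta c by simp
  have yprox: "y n \<in> Prox (\<beta> * c) (fconj f) (y (n - 1) + (\<beta> * c) *\<^sub>R H (x n))"
    using linesearch[OF n] by (auto simp: c_def)
  have wprox: "w n \<in> Prox (1 / (\<beta> * c)) f ((1 / (\<beta> * c)) *\<^sub>R y (n - 1) + H (x n))"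
    using w_def[OF n] by (simp add: c_def)
  note M = moreau_y[OF f_pcc bc wprox yprox]
  define fwn where "fwn = real_of_ereal (f (w n))"
  have fwn: "f (w n) = ereal fwn" using M(3) by (simp add: fwn_def)
  have yn_dom: "y n \<in> edom (fconj f)" using M(4) by (simp add: edom_def)
  define G0 where "G0 = gradxPhi gh H' (x (n - 1)) (y (n - 1))"
  define G1 where "G1 = gradxPhi gh H' (x n) (y n)"
  have xprox0: "x n \<in> Prox p g (z n - p *\<^sub>R G0)" using x_step[OF n] by (simp add: p_def G0_def)
  have xprox1: "x (n + 1) \<in> Prox c g (z (n + 1) - c *\<^sub>R G1)" using x_step[of "n + 1"] by (simp add: c_def G1_def)
  define gxn where "gxn = real_of_ereal (g (x n))"
  define gxn1 where "gxn1 = real_of_ereal (g (x (n + 1)))"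
  have gxn: "g (x n) = ereal gxn" using prox_finite[OF g_pcc xprox0] by (simp add: gxn_def)
  have gxn1: "g (x (n + 1)) = ereal gxn1" using prox_finite[OF g_pcc xprox1] by (simp add: gxn1_def)
  have xn_dom: "x n \<in> edom g" using gxn by (simp add: edom_def)
  obtain gxs where gxs: "g xs = ereal gxs"
  proof -
    have "g xs \<noteq> \<infinity>" using fix_dom(1) by (simp add: edom_def)
    moreover have "g xs \<noteq> -\<infinity>" using g_pcc by (simp add: proper_closed_convex_def)
    ultimately show ?thesis using that by (cases "g xs") auto
  qed
  obtain fws where fws: "f ws = ereal fws"
  proof -
    have "f ws \<noteq> \<infinity>" using fix_dom(2) by (simp add: edom_def)
    moreover have "f ws \<noteq> -\<infinity>" using f_pcc by (simp add: proper_closed_convex_def)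
    ultimately show ?thesis using that by (cases "f ws") auto
  qed
  define dd where "dd = x (n + 1) - x n"
  define s0 where "s0 = (1 / p) *\<^sub>R (z n - p *\<^sub>R G0 - x n)"
  define s1 where "s1 = (1 / c) *\<^sub>R (z (n + 1) - c *\<^sub>R G1 - x (n + 1))"
  have I1: "gxn + s0 \<bullet> dd \<le> gxn1"
    using prox_subgrad[OF g_pcc p xprox0, of "x (n + 1)"] gxn gxn1 by (simp add: s0_def dd_def)
  have I2: "gxn1 + s1 \<bullet> (xs - x (n + 1)) \<le> gxs"
    using prox_subgrad[OF g_pcc c xprox1, of xs] gxn1 gxs by (simp add: s1_def)
  have I3: "h (x n) + gh (x n) \<bullet> (xs - x n) \<le> h xs"
    using convex_grad_ineq[OF h_convex _ UNIV_I UNIV_I, of "\<lambda>d. gh (x n) \<bullet> d"] h_grad[of "x n"] by simp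
  have dH: "((\<lambda>u. H u \<bullet> y n) has_derivative (\<lambda>d. blinfun_apply (H' (x n)) d \<bullet> y n)) (at (x n) within edom g)"
    by (rule has_derivative_inner_left[OF H_deriv[OF xn_dom]])
  have I4: "H (x n) \<bullet> y n + blinfun_apply (H' (x n)) (xs - x n) \<bullet> y n \<le> H xs \<bullet> y n"
    using convex_grad_ineq[OF H_conv[OF yn_dom] dH xn_dom fix_dom(1)] by simp
  have I5: "fwn + y n \<bullet> (ws - w n) \<le> fws"
    using M(2)[of ws] fwn fws by simp
  have adj: "(xs - x n) \<bullet> adjoint (blinfun_apply (H' (x n))) (y n) = blinfun_apply (H' (x n)) (xs - x n) \<bullet> y n"
    by (rule adjoint_works[OF bounded_linear.linear[OF blinfun.bounded_linear_right]])
  have G1e: "G1 \<bullet> (xs - x n) = gh (x n) \<bullet> (xs - x n) + blinfun_apply (H' (x n)) (xs - x n) \<bullet> y n"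
    unfolding G1_def gradxPhi_def using adj by (simp add: inner_simps inner_commute)
  define e1 where "e1 = xs - x (n + 1)"
  define Tz0 where "Tz0 = (z n - x n) \<bullet> dd"
  define T2 where "T2 = (z (n + 1) - x (n + 1)) \<bullet> e1"
  define Q0 where "Q0 = G0 \<bullet> dd"
  define Q1 where "Q1 = G1 \<bullet> e1"
  define Q2 where "Q2 = G1 \<bullet> (xs - x n)"
  define \<theta> where "\<theta> = G1 - G0"
  define Q\<theta> where "Q\<theta> = \<theta> \<bullet> dd"
  define bb where "bb = x n - z (n + 1)"
  define aa where "aa = x (n + 1) - z (n + 1)"
  define Tb where "Tb = bb \<bullet> dd"
  have e0: "c * (s0 \<bullet> dd) = dl * Tz0 - c * Q0"
  proof -
    have "s0 = (1 / p) *\<^sub>R (z n - x n) - G0" using p unfolding s0_def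
      by (simp add: scaleR_diff_right algebra_simps)
    then have "s0 \<bullet> dd = (1 / p) * Tz0 - Q0" by (simp add: Tz0_def Q0_def inner_diff_left)
    then have "c * (s0 \<bullet> dd) = c * ((1 / p) * Tz0) - c * Q0" by (simp add: right_diff_distrib)
    moreover have "c * ((1 / p) * Tz0) = dl * Tz0" by (simp add: dl_def)
    ultimately show ?thesis by simp
  qed
  have e1': "c * (s1 \<bullet> e1) = T2 - c * Q1"
  proof -
    have "s1 = (1 / c) *\<^sub>R (z (n + 1) - x (n + 1)) - G1" using c unfolding s1_def
      by (simp add: scaleR_diff_right algebra_simps)
    then have "s1 \<bullet> e1 = (1 / c) * T2 - Q1" by (simp add: T2_def Q1_def inner_diff_left)
    then have "c * (s1 \<bullet> e1) = c * ((1 / c) * T2) - c * Q1" by (simp add: right_diff_distrib)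
    then show ?thesis using c by simp
  qed
  have F1: "c * (gxn - gxs) \<le> - (dl * Tz0 - c * Q0) - (T2 - c * Q1)"
  proof -
    have "gxn - gxs \<le> - (s0 \<bullet> dd) - s1 \<bullet> e1" using I1 I2 by (simp add: e1_def)
    then have "c * (gxn - gxs) \<le> c * (- (s0 \<bullet> dd) - s1 \<bullet> e1)" by (rule mult_left_mono) (use c in auto)
    then show ?thesis using e0 e1' by (simp add: algebra_simps)
  qed
  have F2: "c * (h (x n) - h xs) + c * (H (x n) \<bullet> y n - H xs \<bullet> y n) \<le> - (c * Q2)"
  proof -
    have "h (x n) - h xs + (H (x n) \<bullet> y n - H xs \<bullet> y n) \<le> - Q2" using I3 I4 G1e by (simp add: Q2_def)
    then have "c * (h (x n) - h xs + (H (x n) \<bullet> y n - H xs \<bullet> y n)) \<le> c * (- Q2)" by (rule mult_left_mono) (use c in auto)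
    then show ?thesis by (simp add: algebra_simps)
  qed
  have F3: "c * (fwn - fws) \<le> c * (y n \<bullet> (w n - ws))"
  proof -
    have "fwn - fws \<le> y n \<bullet> (w n - ws)" using I5 by (simp add: inner_diff_right)
    then show ?thesis by (rule mult_left_mono) (use c in auto)
  qed
  have F5: "c * (y n \<bullet> (w n - ws)) + c * (v \<bullet> (H (x n) - w n)) - c * (H (x n) \<bullet> y n - H xs \<bullet> y n)
      = c * ((v - y n) \<bullet> (H (x n) - w n))"
  proof -
    have "y n \<bullet> (w n - ws) + v \<bullet> (H (x n) - w n) - (H (x n) \<bullet> y n - H xs \<bullet> y n) = (v - y n) \<bullet> (H (x n) - w n)"
      using fix_3 by (simp add: inner_simps inner_commute)
    then have "c * (y n \<bullet> (w n - ws) + v \<bullet> (H (x n) - w n) - (H (x n) \<bullet> y n - H xs \<bullet> y n)) = c * ((v - y n) \<bullet> (H (x n) - w n))"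
      by simp
    then show ?thesis by (simp only: distrib_left right_diff_distrib)
  qed
  have F4: "2 * (c * ((v - y n) \<bullet> (H (x n) - w n))) = 1 / \<beta> * norm (y (n - 1) - v)^2 - 1 / \<beta> * norm (y n - v)^2 - 1 / \<beta> * norm (y n - y (n - 1))^2"
  proof -
    have yd: "y n - y (n - 1) = (\<beta> * c) *\<^sub>R (H (x n) - w n)" using M(1) by simp
    have "2 * ((v - y n) \<bullet> (y n - y (n - 1))) = norm (y (n - 1) - v)^2 - norm (y n - v)^2 - norm (y n - y (n - 1))^2"
    proof -
      have "y (n - 1) - v = - ((v - y n) + (y n - y (n - 1)))" by simp
      then have "norm (y (n - 1) - v)^2 = norm ((v - y n) + (y n - y (n - 1)))^2" by (metis norm_minus_cancel)
      moreover have "norm (y n - v) = norm (v - y n)" by (rule norm_minus_commute)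
      ultimately show ?thesis unfolding power2_norm_eq_inner by (simp add: inner_simps inner_commute)
    qed
    moreover have "(v - y n) \<bullet> (y n - y (n - 1)) = \<beta> * (c * ((v - y n) \<bullet> (H (x n) - w n)))"
      unfolding yd by simp
    ultimately show ?thesis by (rule aux_beta[OF beta])
  qed
  have G: "c * Q0 + c * Q1 - c * Q2 = - (c * Q\<theta>)"
  proof -
    have "Q0 + Q1 - Q2 = - Q\<theta>" unfolding Q0_def Q1_def Q2_def Q\<theta>_def \<theta>_def e1_def dd_def
      by (simp add: inner_simps inner_commute)
    have "c * Q0 + c * Q1 - c * Q2 = c * (Q0 + Q1 - Q2)" by (simp add: algebra_simps)
    also have "\<dots> = c * (- Q\<theta>)" using \<open>Q0 + Q1 - Q2 = - Q\<theta>\<close> by simp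
    finally show ?thesis by simp
  qed
  have zs1: "\<psi> *\<^sub>R z (n + 1) = (\<psi> - 1) *\<^sub>R x n + z n"
    using z_step[of "n + 1"] psi by (simp add: scaleR_add_right)
  have X3: "dl * Tz0 = - (dl * \<psi> * Tb)"
  proof -
    have "z n - x n = - \<psi> *\<^sub>R bb" unfolding bb_def using zs1
      by (simp add: algebra_simps)
    then have "Tz0 = - \<psi> * Tb" by (simp add: Tz0_def Tb_def)
    then show ?thesis by simp
  qed
  define K where "K = \<psi> / (\<psi> - 1)"
  define R where "R = (\<psi> + 1) / \<psi>"
  have F6: "2 * (- T2) = K * norm (z (n + 1) - xs)^2 - K * norm (z (n + 2) - xs)^2 - R * norm aa ^2"
  proof -
    have zc: "((\<psi> - 1) / \<psi>) *\<^sub>R (x (n + 1) - xs) + (1 / \<psi>) *\<^sub>R (z (n + 1) - xs) = z (n + 2) - xs"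
    proof -
      have s1: "(\<psi> - 1) / \<psi> + 1 / \<psi> = 1" using psi by (simp add: field_simps)
      have "z (n + 2) = ((\<psi> - 1) / \<psi>) *\<^sub>R x (n + 1) + (1 / \<psi>) *\<^sub>R z (n + 1)"
        using z_step[of "n + 2"] by simp
      moreover have "xs = ((\<psi> - 1) / \<psi>) *\<^sub>R xs + (1 / \<psi>) *\<^sub>R xs"
        by (metis s1 scaleR_left_distrib scaleR_one)
      ultimately show ?thesis by (simp add: algebra_simps)
    qed
    have "2 * ((x (n + 1) - xs - (z (n + 1) - xs)) \<bullet> (- (x (n + 1) - xs))) = K * norm (z (n + 1) - xs)^2 - K * norm (z (n + 2) - xs)^2 - R * norm (x (n + 1) - xs - (z (n + 1) - xs))^2"
      using zid[OF psi(1), of "x (n + 1) - xs" "z (n + 1) - xs"] unfolding zc K_def R_def .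
    moreover have "x (n + 1) - xs - (z (n + 1) - xs) = aa" by (simp add: aa_def)
    moreover have "(aa \<bullet> (- (x (n + 1) - xs))) = - T2" unfolding T2_def aa_def e1_def
      by (simp add: inner_simps inner_commute)
    ultimately show ?thesis by simp
  qed
  define P where "P = \<psi>^3 * \<phi> / (1 + \<psi>)"
  have F7: "(2 * \<psi> - P) * dl * norm dd ^ 2 + 2 * dl * \<psi> * Tb \<le> R * norm aa ^ 2"
  proof -
    have "aa - bb = dd" by (simp add: aa_def bb_def dd_def)
    then show ?thesis using key_quad[OF psi(1) P_def _ dl, of aa bb] phi by (simp add: R_def Tb_def)
  qed
  have om: "\<omega> * dl * norm dd ^ 2 + \<xi> * dl * norm dd ^ 2 = (2 * \<psi> - P) * dl * norm dd ^ 2"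
  proof -
    have "\<omega> + \<xi> = 2 * \<psi> - P" using omega(1) by (simp add: P_def)
    moreover have "\<omega> * dl * norm dd ^ 2 + \<xi> * dl * norm dd ^ 2 = (\<omega> + \<xi>) * dl * norm dd ^ 2"
      by (simp add: algebra_simps)
    ultimately show ?thesis by simp
  qed
  have F8: "- 2 * c * Q\<theta> \<le> c * p / \<xi> * norm \<theta> ^ 2 + \<xi> * dl * norm dd ^ 2"
    using young_theta[OF c p xi, of \<theta> dd] by (simp add: Q\<theta>_def dl_def)
  have Phiy0: "Phi h H (x n) (y (n - 1)) + H (x n) \<bullet> (y n - y (n - 1)) - Phi h H (x n) (y n) = 0"
    by (simp add: Phi_def inner_diff_right)
  define Jr where "Jr = gxn + h (x n) + fwn + v \<bullet> (H (x n) - w n) - (gxs + h xs + fws)"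
  have Jeq: "g (x n) + ereal (h (x n)) + f (w n) + ereal (v \<bullet> (H (x n) - w n)) - (g xs + ereal (h xs) + f ws) = ereal Jr"
    by (simp add: gxn fwn gxs fws Jr_def)
  have RG: "K * norm (z (n + 2) - xs)^2 + 1 / \<beta> * norm (y n - v)^2 + \<omega> * dl * norm dd ^ 2 + 2 * c * Jr
      \<le> K * norm (z (n + 1) - xs)^2 + 1 / \<beta> * norm (y (n - 1) - v)^2 + c * p / \<xi> * norm \<theta> ^ 2 - 1 / \<beta> * norm (y n - y (n - 1))^2"
  proof -
    show ?thesis
    proof (rule final_comb[where Ag="c * (gxn - gxs)" and Ah="c * (h (x n) - h xs)"
        and AH="c * (H (x n) \<bullet> y n - H xs \<bullet> y n)" and Af="c * (fwn - fws)"
        and Ayw="c * (y n \<bullet> (w n - ws))" and Av="c * (v \<bullet> (H (x n) - w n))"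
        and Avy="c * ((v - y n) \<bullet> (H (x n) - w n))" and Xa="c * Q0" and Xb="c * Q1" and Xc="c * Q2"
        and Xt="c * Q\<theta>" and DT="dl * \<psi> * Tb" and Tq=T2 and RA="R * norm aa ^ 2"
        and Wx="\<xi> * dl * norm dd ^ 2" and W="(2 * \<psi> - P) * dl * norm dd ^ 2"])
      show "2 * c * Jr = 2 * (c * (gxn - gxs) + c * (h (x n) - h xs) + c * (fwn - fws) + c * (v \<bullet> (H (x n) - w n)))"
        by (simp add: Jr_def algebra_simps)
      show "c * (gxn - gxs) \<le> dl * \<psi> * Tb + c * Q0 - T2 + c * Q1" using F1 X3 by simp
    qed (use F2 F3 F5 F4 G F6 F7 om F8 in auto)
  qed
  have RG': "\<psi> / (\<psi> - 1) * norm (z (n + 1 + 1) - xs)^2 + 1 / \<beta> * norm (y (n + 1 - 1) - v)^2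
        + \<omega> * delta \<tau> (n + 1 - 1) * norm (x (n + 1) - x (n + 1 - 1))^2 + 2 * \<tau> n * Jr
      \<le> \<psi> / (\<psi> - 1) * norm (z (n + 1) - xs)^2 + 1 / \<beta> * norm (y (n - 1) - v)^2
        + \<omega> * delta \<tau> (n - 1) * norm (x n - x (n - 1))^2
        - (- (\<tau> n * \<tau> (n - 1) / \<xi>) * norm (gradxPhi gh H' (x n) (y n) - gradxPhi gh H' (x (n - 1)) (y (n - 1)))^2
           + 1 / \<beta> * norm (y n - y (n - 1))^2 + \<omega> * delta \<tau> (n - 1) * norm (x n - x (n - 1))^2 - 2 * \<tau> n * 0)"
  proof -
    have n2: "n + 1 + 1 = n + 2" "n + 1 - 1 = n" by simp_all
    show ?thesis unfolding n2 using RG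
      by (simp add: K_def c_def p_def delta_n \<theta>_def G0_def G1_def dd_def)
  qed
  have RG'': "ereal (\<psi> / (\<psi> - 1) * norm (z (n + 1 + 1) - xs)^2 + 1 / \<beta> * norm (y (n + 1 - 1) - v)^2
        + \<omega> * delta \<tau> (n + 1 - 1) * norm (x (n + 1) - x (n + 1 - 1))^2) + ereal (2 * \<tau> n) * ereal Jr
      \<le> ereal (\<psi> / (\<psi> - 1) * norm (z (n + 1) - xs)^2 + 1 / \<beta> * norm (y (n - 1) - v)^2
        + \<omega> * delta \<tau> (n - 1) * norm (x n - x (n - 1))^2
        - (- (\<tau> n * \<tau> (n - 1) / \<xi>) * norm (gradxPhi gh H' (x n) (y n) - gradxPhi gh H' (x (n - 1)) (y (n - 1)))^2
           + 1 / \<beta> * norm (y n - y (n - 1))^2 + \<omega> * delta \<tau> (n - 1) * norm (x n - x (n - 1))^2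
           - 2 * \<tau> n * (Phi h H (x n) (y (n - 1)) + H (x n) \<bullet> (y n - y (n - 1)) - Phi h H (x n) (y n))))"
    unfolding Phiy0 using RG' by simp
  show ?thesis unfolding Let_def
    apply (subst Jeq)
    apply (rule RG'')
    done
qed
  done




end
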